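(* Let $n\ge1$ and $a_k(\rho)=\tfrac12(\rho^k+\rho^{-k})$. Let $\rho_n^*>1$ denote the unique root in $(1,\infty)$ of $a_{n+1}(\rho)-(n+1)a_1(\rho)=0$. Then $$\min_{z\in\mathcal{E}_\rho}|U_n(z)|=\begin{cases}\dfrac{\rho^{n+1}-\rho^{-n-1}}{\rho+\rho^{-1}}, & n\text{ odd},\ \rho>1,\\[2mm] \dfrac{\rho^{n+1}+\rho^{-n-1}}{\rho+\rho^{-1}}, & n\text{ even},\ \rho\ge\rho_n^*,\end{cases}$$ and in both cases the minimum is attained if and only if $z=\pm\tfrac{i}{2}(\rho-\rho^{-1})$.
   Context: $U_n$ is the Chebyshev polynomial of the second kind, $U_n(\cos\theta)=\sin((n+1)\theta)/\sin\theta$. The Bernstein ellipse is $\mathcal{E}_\rho=\{\tfrac12(u+u^{-1}): u=\rho e^{i\theta},\ 0\le\theta<2\pi\}$. *)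

theory Defs
  imports Complex_Main
begin

text \<open>Chebyshev polynomials of the second kind, via the standard three-term recurrence
  (equivalently U_n(cos t) = sin((n+1)t)/sin t).\<close>
fun chebU :: "nat \<Rightarrow> complex \<Rightarrow> complex" where
  "chebU 0 z = 1"
| "chebU (Suc 0) z = 2 * z"
| "chebU (Suc (Suc n)) z = 2 * z * chebU (Suc n) z - chebU n z"

definition bernstein_ellipse :: "real \<Rightarrow> complex set" where
  "bernstein_ellipse \<rho> =
     {(u + inverse u) / 2 | u. \<exists>\<theta>. 0 \<le> \<theta> \<and> \<theta> < 2 * pi \<and> u = complex_of_real \<rho> * cis \<theta>}"

definition a_coef :: "nat \<Rightarrow> real \<Rightarrow> real" where
  "a_coef k \<rho> = (\<rho> ^ k + inverse (\<rho> ^ k)) / 2"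

definition rho_star :: "nat \<Rightarrow> real" where
  "rho_star n = (THE \<rho>. 1 < \<rho> \<and> a_coef (Suc n) \<rho> - real (Suc n) * a_coef 1 \<rho> = 0)"

end

theory Submission
  imports Defs
begin


lemma chebU_u:
  fixes u :: complex assumes "u \<noteq> 0"
  shows "chebU k ((u + inverse u)/2) * (u - inverse u) = u^(k+1) - inverse (u^(k+1))
       \<and> chebU (Suc k) ((u + inverse u)/2) * (u - inverse u) = u^(k+2) - inverse (u^(k+2))"
proof (induction k)
  case 0 then show ?case using assms by (simp add: field_simps power2_eq_square)
next
  case (Suc k)
  define w where "w = (u + inverse u)/2"
  have w2: "2 * w = u + inverse u" unfolding w_def by simp
  have "chebU (Suc (Suc k)) w * (u - inverse u)
     = (2 * w) * (chebU (Suc k) w * (u - inverse u)) - chebU k w * (u - inverse u)"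
    by (simp add: algebra_simps)
  hence "chebU (Suc (Suc k)) ((u + inverse u)/2) * (u - inverse u)
     = (u + inverse u) * (chebU (Suc k) ((u + inverse u)/2) * (u - inverse u))
       - chebU k ((u + inverse u)/2) * (u - inverse u)" unfolding w2 by (simp add: w_def)
  also have "\<dots> = (u + inverse u) * (u^(k+2) - inverse (u^(k+2))) - (u^(k+1) - inverse (u^(k+1)))"
    using Suc by simp
  also have "\<dots> = u^(k+3) - inverse (u^(k+3))"
    using assms by (simp add: field_simps power_add eval_nat_numeral)
  finally show ?case using Suc by (simp add: eval_nat_numeral)
qed

lemma Re_rcis: "Re (complex_of_real r * cis x) = r * cos x" by simp
lemma Im_rcis: "Im (complex_of_real r * cis x) = r * sin x" by simp

lemma alg1:
  fixes P q c s :: real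
  assumes "s^2 + c^2 = 1" "P*q = 1"
  shows "((P-q)*c)^2 + ((P+q)*s)^2 = (P+q)^2 - 4*c^2"
proof -
  have "((P-q)*c)^2 + ((P+q)*s)^2 = (P^2+q^2)*(s^2+c^2) - 2*(P*q)*c^2 + 2*(P*q)*s^2"
    by (simp add: power2_eq_square algebra_simps)
  also have "\<dots> = P^2+q^2 - 2*c^2 + 2*s^2" using assms by simp
  also have "\<dots> = P^2+q^2 + 2 - 4*c^2" using assms by simp
  also have "\<dots> = (P+q)^2 - 4*c^2" using assms by (simp add: power2_eq_square algebra_simps)
  finally show ?thesis .
qed

lemma normN:
  assumes "\<rho> > 0"
  shows "(cmod ((complex_of_real \<rho> * cis \<theta>)^m - inverse ((complex_of_real \<rho> * cis \<theta>)^m)))^2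
     = (\<rho>^m + inverse (\<rho>^m))^2 - 4 * (cos (real m * \<theta>))^2"
proof -
  define P where "P = \<rho>^m"
  define c where "c = cos (real m * \<theta>)"
  define s where "s = sin (real m * \<theta>)"
  have e: "(complex_of_real \<rho> * cis \<theta>)^m = complex_of_real P * cis (real m * \<theta>)"
    unfolding P_def by (simp add: power_mult_distrib DeMoivre)
  have i: "inverse ((complex_of_real \<rho> * cis \<theta>)^m) = complex_of_real (inverse P) * cis (- (real m * \<theta>))"
    unfolding e by simp
  have cs: "s^2 + c^2 = 1" unfolding s_def c_def by simp
  have P0: "P > 0" unfolding P_def using assms by simp
  have Pinv: "x * P / P\<^sup>2 = inverse P * x" for x using P0 by (simp add: power2_eq_square field_simps)
  have re: "Re ((complex_of_real \<rho> * cis \<theta>)^m - inverse ((complex_of_real \<rho> * cis \<theta>)^m)) = (P - inverse P) * c"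
    unfolding i e c_def minus_complex.sel Re_rcis apply (simp add: algebra_simps)
    using P0 by (simp add: power2_eq_square field_simps)
  have im: "Im ((complex_of_real \<rho> * cis \<theta>)^m - inverse ((complex_of_real \<rho> * cis \<theta>)^m)) = (P + inverse P) * s"
    unfolding i e s_def minus_complex.sel Im_rcis apply (simp add: algebra_simps)
    using P0 by (simp add: power2_eq_square field_simps)
  have "(cmod ((complex_of_real \<rho> * cis \<theta>)^m - inverse ((complex_of_real \<rho> * cis \<theta>)^m)))^2
     = ((P - inverse P) * c)^2 + ((P + inverse P) * s)^2"
    unfolding cmod_power2 re im ..
  also have "\<dots> = (P + inverse P)^2 - 4 * c^2"
    by (rule alg1[OF cs]) (use P0 in simp)
  finally show ?thesis unfolding P_def c_def .
qed



lemma sin_mult_bound: "\<bar>sin (real k * a)\<bar> \<le> real k * \<bar>sin a\<bar>"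
proof (induction k)
  case 0 then show ?case by simp
next
  case (Suc k)
  have "sin (real (Suc k) * a) = sin (real k * a) * cos a + cos (real k * a) * sin a"
    by (simp add: distrib_right sin_add)
  hence "\<bar>sin (real (Suc k) * a)\<bar> \<le> \<bar>sin (real k * a)\<bar> * \<bar>cos a\<bar> + \<bar>cos (real k * a)\<bar> * \<bar>sin a\<bar>"
    by (simp add: abs_mult[symmetric] abs_triangle_ineq)
  also have "\<dots> \<le> \<bar>sin (real k * a)\<bar> + \<bar>sin a\<bar>"
  proof -
    have "\<bar>sin (real k * a)\<bar> * \<bar>cos a\<bar> \<le> \<bar>sin (real k * a)\<bar>"
      by (rule mult_left_le) (simp_all add: abs_cos_le_one)
    moreover have "\<bar>cos (real k * a)\<bar> * \<bar>sin a\<bar> \<le> \<bar>sin a\<bar>"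
      by (rule mult_left_le_one_le) (simp_all add: abs_cos_le_one)
    ultimately show ?thesis by linarith
  qed
  finally have "\<bar>sin (real (Suc k) * a)\<bar> \<le> \<bar>sin (real k * a)\<bar> + \<bar>sin a\<bar>" .
  moreover have "real (Suc k) * \<bar>sin a\<bar> = real k * \<bar>sin a\<bar> + \<bar>sin a\<bar>" by (simp add: algebra_simps)
  ultimately show ?case using Suc by linarith
qed

lemma cos_rec: "cos (real (k+2) * a) = 2 * cos (real (k+1) * a) * cos a - cos (real k * a)"
proof -
  have "cos (real (k+2) * a) = cos (real (k+1) * a + a)" by (simp add: algebra_simps)
  moreover have "cos (real k * a) = cos (real (k+1) * a - a)" by (simp add: algebra_simps)
  ultimately show ?thesis by (simp add: cos_add cos_diff)
qed

lemma cos_odd_bound: "\<bar>cos (real (2*j+1) * a)\<bar> \<le> real (2*j+1) * \<bar>cos a\<bar>"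
proof (induction j)
  case 0 then show ?case by simp
next
  case (Suc j)
  have "cos (real (2*Suc j+1) * a) = 2 * cos (real (2*j+2) * a) * cos a - cos (real (2*j+1) * a)"
    using cos_rec[of "2*j+1" a] by (simp add: algebra_simps)
  hence "\<bar>cos (real (2*Suc j+1) * a)\<bar> \<le> 2 * \<bar>cos (real (2*j+2) * a)\<bar> * \<bar>cos a\<bar> + \<bar>cos (real (2*j+1) * a)\<bar>"
    by (metis abs_triangle_ineq4 abs_mult abs_numeral)
  also have "\<dots> \<le> 2 * \<bar>cos a\<bar> + real (2*j+1) * \<bar>cos a\<bar>"
  proof -
    have "\<bar>cos (real (2*j+2) * a)\<bar> * \<bar>cos a\<bar> \<le> \<bar>cos a\<bar>"
      by (rule mult_left_le_one_le) (simp_all add: abs_cos_le_one)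
    then show ?thesis using Suc by linarith
  qed
  finally show ?case by (simp add: algebra_simps)
qed

lemma cos_odd_strict:
  assumes "j \<ge> 1" "cos a \<noteq> 0"
  shows "\<bar>cos (real (2*j+1) * a)\<bar> < real (2*j+1) * \<bar>cos a\<bar>"
  using assms(1)
proof (induction j rule: dec_induct)
  case base
  have "cos (real (2*1+1) * a) = cos a * (4 * (cos a)^2 - 3)"
    using cos_treble_cos[of a]
    by (simp add: power3_eq_cube power2_eq_square algebra_simps)
  moreover have "\<bar>4 * (cos a)^2 - 3\<bar> < 3"
  proof -
    have h1: "(cos a)^2 \<le> 1" by (simp add: abs_cos_le_one abs_square_le_1)
    have h2: "(cos a)^2 > 0" using assms(2) by simp
    show ?thesis unfolding abs_less_iff using h1 h2 by linarith
  qed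
  ultimately show ?case using assms(2) by (simp add: abs_mult)
next
  case (step j)
  have "cos (real (2*Suc j+1) * a) = 2 * cos (real (2*j+2) * a) * cos a - cos (real (2*j+1) * a)"
    using cos_rec[of "2*j+1" a] by (simp add: algebra_simps)
  hence "\<bar>cos (real (2*Suc j+1) * a)\<bar> \<le> 2 * \<bar>cos (real (2*j+2) * a)\<bar> * \<bar>cos a\<bar> + \<bar>cos (real (2*j+1) * a)\<bar>"
    by (metis abs_triangle_ineq4 abs_mult abs_numeral)
  also have "\<dots> < 2 * \<bar>cos a\<bar> + real (2*j+1) * \<bar>cos a\<bar>"
  proof -
    have "\<bar>cos (real (2*j+2) * a)\<bar> * \<bar>cos a\<bar> \<le> \<bar>cos a\<bar>"
      by (rule mult_left_le_one_le) (simp_all add: abs_cos_le_one)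
    then show ?thesis using step by linarith
  qed
  finally show ?case by (simp add: algebra_simps)
qed



definition fstar :: "nat \<Rightarrow> real \<Rightarrow> real" where
  "fstar m x = a_coef m x - real m * a_coef 1 x"

lemma alg2:
  fixes M a b q :: real
  shows "(M*a + -(M*a*b))/2 - M*((1 + -q)/2) = M/2*(a - a*b) - M/2*(1 - q)"
  by (simp add: algebra_simps)

lemma fstar_deriv:
  assumes "x > 0" "m \<ge> 1"
  shows "(fstar m has_real_derivative
     (real m/2 * (x^(m - Suc 0) - inverse (x^(m+1))) - real m/2 * (1 - inverse (x^2)))) (at x)"
proof -
  have e: "fstar m = (\<lambda>x. (x^m + inverse (x^m))/2 - real m * ((x + inverse x)/2))"
    by (auto simp: fstar_def a_coef_def fun_eq_iff)
  have xm: "x^m \<noteq> 0" using assms by simp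
  have d: "((\<lambda>x. (x^m + inverse (x^m))/2 - real m * ((x + inverse x)/2)) has_real_derivative
     ((real m * x^(m - Suc 0) + (- (real m * x^(m - Suc 0) * inverse ((x^m) ^ Suc (Suc 0)))))/2
       - real m * ((1 + (- (inverse x ^ Suc (Suc 0))))/2))) (at x)"
    by (intro DERIV_diff DERIV_cdivide DERIV_cmult DERIV_add DERIV_pow DERIV_ident
        DERIV_inverse_fun DERIV_inverse xm) (use assms in simp)
  have eq: "((real m * x^(m - Suc 0) + (- (real m * x^(m - Suc 0) * inverse ((x^m) ^ Suc (Suc 0)))))/2
       - real m * ((1 + (- (inverse x ^ Suc (Suc 0))))/2))
     = real m/2 * (x^(m - Suc 0) - inverse (x^(m+1))) - real m/2 * (1 - inverse (x^2))"
  proof -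
    have "x^(m - Suc 0) * inverse ((x^m) ^ Suc (Suc 0)) = inverse (x^(m+1))"
    proof -
      have "x^(m - Suc 0) * x^(m+1) = (x^m)^2"
      proof -
        have k: "m - Suc 0 + (m+1) = m*2" using assms(2) by simp
        have "x^(m - Suc 0) * x^(m+1) = x^(m - Suc 0 + (m+1))" by (simp only: power_add)
        also have "\<dots> = x^(m*2)" by (simp only: k)
        also have "\<dots> = (x^m)^2" by (simp add: power_mult)
        finally show ?thesis .
      qed
      thus ?thesis using assms by (simp add: field_simps eval_nat_numeral)
    qed
    moreover have h2: "inverse x ^ Suc (Suc 0) = inverse (x^2)" by (simp add: power_inverse eval_nat_numeral)
    ultimately show ?thesis using alg2[of "real m" "x^(m - Suc 0)" "inverse ((x^m) ^ Suc (Suc 0))" "inverse x ^ Suc (Suc 0)"]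
      by (simp only:)
  qed
  show ?thesis unfolding e using d eq by simp
qed

lemma fstar_mono:
  assumes "m \<ge> 2" "1 < x" "x < y"
  shows "fstar m x < fstar m y"
proof (rule DERIV_pos_imp_increasing[OF assms(3)])
  fix z assume z: "x \<le> z" "z \<le> y"
  hence z1: "1 < z" using assms by simp
  have a: "1 < z^(m - Suc 0)" using z1 assms(1) by (intro one_less_power) auto
  have "z^2 \<le> z^(m+1)" using z1 assms(1) by (intro power_increasing) auto
  hence b: "inverse (z^(m+1)) \<le> inverse (z^2)" using z1 by (intro le_imp_inverse_le) auto
  have "0 < real m/2 * ((z^(m - Suc 0) - 1) + (inverse (z^2) - inverse (z^(m+1))))"
    using a b assms(1) by (intro mult_pos_pos) auto
  also have "\<dots> = real m/2 * (z^(m - Suc 0) - inverse (z^(m+1))) - real m/2 * (1 - inverse (z^2))"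
    by (simp add: algebra_simps)
  finally show "\<exists>y. DERIV (fstar m) z :> y \<and> 0 < y"
    using fstar_deriv[of z m] z1 assms(1) by auto
qed

lemma fstar_cont: "continuous_on {1..b} (fstar m)"
proof -
  have e: "fstar m = (\<lambda>x. (x^m + inverse (x^m))/2 - real m * ((x + inverse x)/2))"
    by (auto simp: fstar_def a_coef_def fun_eq_iff)
  show ?thesis unfolding e by (intro continuous_intros) auto
qed

lemma fstar_one: "fstar m 1 = 1 - real m"
  by (simp add: fstar_def a_coef_def)

lemma fstar_big:
  assumes "m \<ge> 2"
  shows "fstar m (real m + 1) \<ge> 0"
proof -
  define R where "R = real m + 1"
  have R1: "R \<ge> 1" unfolding R_def by simp
  have h1: "R^2 \<le> R^m" using R1 assms by (intro power_increasing) auto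
  have h2: "real m * inverse R \<le> 1" unfolding R_def by (simp add: field_simps)
  have h3: "inverse (R^m) \<ge> 0" using R1 by simp
  have h4: "R^2 = real m * R + R" unfolding R_def by (simp add: power2_eq_square algebra_simps)
  have "fstar m R = (R^m + inverse (R^m))/2 - (real m * R + real m * inverse R)/2"
    by (simp add: fstar_def a_coef_def algebra_simps)
  also have "\<dots> \<ge> 0"
  proof -
    have "R^m + inverse (R^m) - (real m * R + real m * inverse R) \<ge> 0" using h1 h2 h3 h4 R1 by linarith
    thus ?thesis by (simp only: diff_divide_distrib[symmetric]) simp
  qed
  finally show ?thesis unfolding R_def .
qed

lemma fstar_root:
  assumes "m \<ge> 2"
  shows "\<exists>!r. 1 < r \<and> fstar m r = 0"
proof -
  obtain r where r: "1 \<le> r" "r \<le> real m + 1" "fstar m r = 0"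
    using IVT'[of "fstar m" 1 0 "real m + 1"] fstar_one[of m] fstar_big[OF assms] fstar_cont assms
    by auto
  have "r \<noteq> 1" using r(3) fstar_one[of m] assms by auto
  hence r1: "1 < r" using r(1) by simp
  show ?thesis
  proof (rule ex1I[of _ r])
    show "1 < r \<and> fstar m r = 0" using r1 r(3) by simp
  next
    fix s assume s: "1 < s \<and> fstar m s = 0"
    show "s = r"
    proof (rule ccontr)
      assume "s \<noteq> r"
      hence "s < r \<or> r < s" by linarith
      thus False using fstar_mono[OF assms] s r1 r(3) by fastforce
    qed
  qed
qed

lemma rho_star_props:
  assumes "n \<ge> 1" "rho_star n \<le> \<rho>"
  shows "1 < \<rho> \<and> 0 \<le> a_coef (Suc n) \<rho> - real (Suc n) * a_coef 1 \<rho>"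
proof -
  have m: "Suc n \<ge> 2" using assms by simp
  have ex: "\<exists>!r. 1 < r \<and> a_coef (Suc n) r - real (Suc n) * a_coef 1 r = 0"
    using fstar_root[OF m] unfolding fstar_def .
  have rs: "1 < rho_star n \<and> fstar (Suc n) (rho_star n) = 0"
    using theI'[OF ex] unfolding rho_star_def fstar_def .
  have r1: "1 < \<rho>" using rs assms by simp
  have "fstar (Suc n) (rho_star n) \<le> fstar (Suc n) \<rho>"
  proof (cases "rho_star n = \<rho>")
    case False
    then show ?thesis using fstar_mono[OF m, of "rho_star n" \<rho>] rs assms by simp
  qed simp
  thus ?thesis using rs r1 unfolding fstar_def by simp
qed



lemma rho_gt2:
  assumes "(\<rho>::real) > 1" shows "\<rho> + inverse \<rho> > 2"
proof -
  have "(\<rho> - 1)^2 > 0" using assms by simp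
  hence "2 * \<rho> < \<rho> * \<rho> + 1" by (simp add: power2_eq_square algebra_simps)
  hence "2 < (\<rho> * \<rho> + 1) / \<rho>" using assms by (simp add: field_simps)
  also have "(\<rho> * \<rho> + 1) / \<rho> = \<rho> + inverse \<rho>" using assms by (simp add: field_simps)
  finally show ?thesis .
qed

lemma calc:
  fixes \<rho> \<theta> :: real and n :: nat
  assumes "\<rho> > 1"
  defines "u \<equiv> complex_of_real \<rho> * cis \<theta>"
  shows "(cmod (chebU n ((u + inverse u)/2)))^2 * ((\<rho> + inverse \<rho>)^2 - 4 * (cos \<theta>)^2)
           = (\<rho>^(n+1) + inverse (\<rho>^(n+1)))^2 - 4 * (cos (real (n+1) * \<theta>))^2"
    and "(\<rho> + inverse \<rho>)^2 - 4 * (cos \<theta>)^2 > 0"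
proof -
  have u0: "u \<noteq> 0" unfolding u_def using assms by simp
  have h: "chebU n ((u + inverse u)/2) * (u - inverse u) = u^(n+1) - inverse (u^(n+1))"
    using chebU_u[OF u0, of n] by simp
  hence "cmod (chebU n ((u + inverse u)/2)) * cmod (u - inverse u) = cmod (u^(n+1) - inverse (u^(n+1)))"
    by (metis norm_mult)
  hence "(cmod (chebU n ((u + inverse u)/2)))^2 * (cmod (u - inverse u))^2 = (cmod (u^(n+1) - inverse (u^(n+1))))^2"
    by (metis power_mult_distrib)
  moreover have "(cmod (u - inverse u))^2 = (\<rho> + inverse \<rho>)^2 - 4 * (cos \<theta>)^2"
    using normN[of \<rho> \<theta> 1] assms unfolding u_def by simp
  moreover have "(cmod (u^(n+1) - inverse (u^(n+1))))^2 = (\<rho>^(n+1) + inverse (\<rho>^(n+1)))^2 - 4 * (cos (real (n+1) * \<theta>))^2"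
    using normN[of \<rho> \<theta> "n+1"] assms unfolding u_def by simp
  ultimately show "(cmod (chebU n ((u + inverse u)/2)))^2 * ((\<rho> + inverse \<rho>)^2 - 4 * (cos \<theta>)^2)
           = (\<rho>^(n+1) + inverse (\<rho>^(n+1)))^2 - 4 * (cos (real (n+1) * \<theta>))^2" by simp
  have g: "\<rho> + inverse \<rho> > 2" using rho_gt2 assms by simp
  have "2 * 2 < (\<rho> + inverse \<rho>) * (\<rho> + inverse \<rho>)" using g by (intro mult_strict_mono) auto
  moreover have "(cos \<theta>)^2 \<le> 1" by (simp add: abs_square_le_1)
  ultimately show "(\<rho> + inverse \<rho>)^2 - 4 * (cos \<theta>)^2 > 0" by (simp add: power2_eq_square)
qed

lemma zform:
  fixes \<rho> \<theta> :: real
  assumes "\<rho> > 0"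
  defines "u \<equiv> complex_of_real \<rho> * cis \<theta>"
  shows "(u + inverse u)/2 = complex_of_real ((\<rho> + inverse \<rho>)/2 * cos \<theta>) + \<i> * complex_of_real ((\<rho> - inverse \<rho>)/2 * sin \<theta>)"
proof -
  have i: "inverse u = complex_of_real (inverse \<rho>) * cis (- \<theta>)" unfolding u_def by simp
  show ?thesis unfolding i unfolding u_def
    by (rule complex_eqI) (simp_all only: Re_divide_numeral Im_divide_numeral plus_complex.sel Re_rcis Im_rcis
        Re_complex_of_real Im_complex_of_real Re_i_times Im_i_times cos_minus sin_minus, simp_all add: algebra_simps)
qed

lemma reduce:
  fixes V t Dq Sq :: real
  assumes "V \<ge> 0" "t \<ge> 0" "Dq > 0" "V^2 * Dq = Sq"
  shows "(t \<le> V \<longleftrightarrow> t^2 * Dq \<le> Sq) \<and> (V = t \<longleftrightarrow> t^2 * Dq = Sq)"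
proof -
  have "t \<le> V \<longleftrightarrow> t^2 \<le> V^2" using assms(1,2) by (metis power2_le_imp_le power_mono)
  also have "\<dots> \<longleftrightarrow> t^2 * Dq \<le> V^2 * Dq" using assms(3) by simp
  finally have 1: "t \<le> V \<longleftrightarrow> t^2 * Dq \<le> Sq" using assms(4) by simp
  have "V = t \<longleftrightarrow> V^2 = t^2" using assms(1,2) by (metis power2_eq_iff_nonneg)
  also have "\<dots> \<longleftrightarrow> V^2 * Dq = t^2 * Dq" using assms(3) by simp
  finally have 2: "V = t \<longleftrightarrow> t^2 * Dq = Sq" using assms(4) by auto
  show ?thesis using 1 2 by simp
qed



lemma odd_alg:
  fixes \<rho> \<theta> :: real and n :: nat
  assumes "odd n" "\<rho> > 1"
  defines "t \<equiv> (\<rho>^(n+1) - inverse (\<rho>^(n+1))) / (\<rho> + inverse \<rho>)"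
  defines "Dq \<equiv> (\<rho> + inverse \<rho>)^2 - 4 * (cos \<theta>)^2"
  defines "Sq \<equiv> (\<rho>^(n+1) + inverse (\<rho>^(n+1)))^2 - 4 * (cos (real (n+1) * \<theta>))^2"
  shows "t^2 * Dq \<le> Sq \<and> (t^2 * Dq = Sq \<longleftrightarrow> cos \<theta> = 0)"
proof -
  define P where "P = \<rho>^(n+1)"
  define Q where "Q = inverse P"
  define B where "B = \<rho> + inverse \<rho>"
  define c where "c = cos \<theta>"
  define cm where "cm = cos (real (n+1) * \<theta>)"
  have P1: "P > 1" unfolding P_def using assms(2) by (intro one_less_power) auto
  have PQ: "P * Q = 1" unfolding Q_def using P1 by simp
  have QP: "Q < P" unfolding Q_def using P1
    by (metis inverse_less_1_iff less_trans linorder_not_less not_one_le_zero)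
  have B0: "B > 0" unfolding B_def using rho_gt2[OF assms(2)] by simp
  have tB: "t * B = P - Q" unfolding t_def P_def Q_def B_def using B0 B_def by simp
  have t0: "t > 0" using tB B0 QP by (metis diff_gt_0_iff_gt zero_less_mult_pos2)
  have e1: "t^2 * Dq = (P - Q)^2 - 4 * c^2 * t^2"
    unfolding Dq_def B_def[symmetric] c_def[symmetric] tB[symmetric] by (simp add: algebra_simps power2_eq_square)
  have e2: "(P - Q)^2 = (P + Q)^2 - 4" using PQ by (simp add: power2_eq_square algebra_simps)
  have e3: "Sq = (P + Q)^2 - 4 * cm^2" unfolding Sq_def P_def Q_def cm_def by simp
  have cm1: "cm^2 \<le> 1" unfolding cm_def by (simp add: abs_square_le_1)
  have diff: "Sq - t^2 * Dq = 4 * (1 - cm^2) + 4 * (c^2 * t^2)" using e1 e2 e3 by simp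
  have le: "t^2 * Dq \<le> Sq" using diff cm1 by (smt (verit) mult_nonneg_nonneg zero_le_power2)
  have "t^2 * Dq = Sq \<longleftrightarrow> c = 0"
  proof
    assume "t^2 * Dq = Sq"
    hence "4 * (1 - cm^2) + 4 * (c^2 * t^2) = 0" using diff by simp
    moreover have "c^2 * t^2 \<ge> 0" by simp
    ultimately have "c^2 * t^2 = 0" using cm1 by (smt (verit))
    thus "c = 0" using t0 by simp
  next
    assume c0: "c = 0"
    obtain j where j: "n + 1 = 2 * j" using assms(1) by (metis odd_Suc_div_two odd_two_times_div_two_nat Suc_eq_plus1 dvd_mult_div_cancel even_Suc odd_pos)
    have s2: "sin (2 * \<theta>) = 0" using c0 unfolding c_def by (simp add: sin_double)
    have "\<bar>sin (real j * (2 * \<theta>))\<bar> \<le> real j * \<bar>sin (2 * \<theta>)\<bar>" by (rule sin_mult_bound)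
    hence "sin (real j * (2 * \<theta>)) = 0" using s2 by simp
    moreover have "real (n+1) * \<theta> = real j * (2 * \<theta>)" using j by (simp add: algebra_simps flip: of_nat_mult)
    ultimately have "sin (real (n+1) * \<theta>) = 0" by (simp only:)
    hence "cm^2 = 1" unfolding cm_def using sin_cos_squared_add[of "real (n+1) * \<theta>"] by simp
    thus "t^2 * Dq = Sq" using diff c0 by simp
  qed
  thus ?thesis using le unfolding c_def by simp
qed

lemma even_alg:
  fixes \<rho> \<theta> :: real and n :: nat
  assumes "even n" "n \<ge> 1" "\<rho> > 1"
    and ge: "0 \<le> a_coef (Suc n) \<rho> - real (Suc n) * a_coef 1 \<rho>"
  defines "t \<equiv> (\<rho>^(n+1) + inverse (\<rho>^(n+1))) / (\<rho> + inverse \<rho>)"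
  defines "Dq \<equiv> (\<rho> + inverse \<rho>)^2 - 4 * (cos \<theta>)^2"
  defines "Sq \<equiv> (\<rho>^(n+1) + inverse (\<rho>^(n+1)))^2 - 4 * (cos (real (n+1) * \<theta>))^2"
  shows "t^2 * Dq \<le> Sq \<and> (t^2 * Dq = Sq \<longleftrightarrow> cos \<theta> = 0)"
proof -
  define P where "P = \<rho>^(n+1)"
  define Q where "Q = inverse P"
  define B where "B = \<rho> + inverse \<rho>"
  define c where "c = cos \<theta>"
  define cm where "cm = cos (real (n+1) * \<theta>)"
  obtain j where j: "n = 2 * j" using assms(1) by blast
  have j1: "j \<ge> 1" using j assms(2) by simp
  have B0: "B > 0" unfolding B_def using rho_gt2[OF assms(3)] by simp
  have tB: "t * B = P + Q" unfolding t_def P_def Q_def B_def using B0 B_def by simp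
  have PQ: "P + Q \<ge> real (n+1) * B" using ge unfolding a_coef_def P_def Q_def B_def by simp
  have tm: "t \<ge> real (n+1)"
  proof -
    have "real (n+1) * B \<le> t * B" using PQ tB by simp
    thus ?thesis using B0 by simp
  qed
  have e1: "t^2 * Dq = (P + Q)^2 - 4 * c^2 * t^2"
    unfolding Dq_def B_def[symmetric] c_def[symmetric] tB[symmetric] by (simp add: algebra_simps power2_eq_square)
  have e3: "Sq = (P + Q)^2 - 4 * cm^2" unfolding Sq_def P_def Q_def cm_def by simp
  have diff: "Sq - t^2 * Dq = 4 * ((t * \<bar>c\<bar>)^2 - \<bar>cm\<bar>^2)" using e1 e3 by (simp add: power_mult_distrib)
  have nm: "real (n+1) = real (2*j+1)" using j by simp
  have b1: "\<bar>cm\<bar> \<le> real (n+1) * \<bar>c\<bar>" unfolding cm_def c_def nm by (rule cos_odd_bound)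
  also have "\<dots> \<le> t * \<bar>c\<bar>" using tm by (intro mult_right_mono) auto
  finally have b2: "\<bar>cm\<bar> \<le> t * \<bar>c\<bar>" .
  hence "\<bar>cm\<bar>^2 \<le> (t * \<bar>c\<bar>)^2" by (intro power_mono) auto
  hence le: "t^2 * Dq \<le> Sq" using diff by simp
  have "t^2 * Dq = Sq \<longleftrightarrow> c = 0"
  proof
    assume eq: "t^2 * Dq = Sq"
    show "c = 0"
    proof (rule ccontr)
      assume "c \<noteq> 0"
      hence "\<bar>cm\<bar> < real (n+1) * \<bar>c\<bar>" unfolding cm_def c_def nm by (intro cos_odd_strict j1)
      also have "\<dots> \<le> t * \<bar>c\<bar>" using tm by (intro mult_right_mono) auto
      finally have "\<bar>cm\<bar>^2 < (t * \<bar>c\<bar>)^2" by (intro power_strict_mono) auto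
      thus False using eq diff by simp
    qed
  next
    assume c0: "c = 0"
    hence "cm = 0" using b1 by simp
    thus "t^2 * Dq = Sq" using diff c0 by simp
  qed
  thus ?thesis using le unfolding c_def by simp
qed



lemma ell_iff:
  "z \<in> bernstein_ellipse \<rho> \<longleftrightarrow> (\<exists>\<theta>. 0 \<le> \<theta> \<and> \<theta> < 2 * pi \<and>
     z = (complex_of_real \<rho> * cis \<theta> + inverse (complex_of_real \<rho> * cis \<theta>)) / 2)"
  unfolding bernstein_ellipse_def by blast

theorem mainTheorem6:
  fixes n :: nat and \<rho> :: real
  assumes "n \<ge> 1"
    and "(odd n \<and> 1 < \<rho>) \<or> (even n \<and> rho_star n \<le> \<rho>)"
  shows "(\<forall>z\<in>bernstein_ellipse \<rho>.
            (if odd n then (\<rho> ^ (n+1) - inverse (\<rho> ^ (n+1))) / (\<rho> + inverse \<rho>)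
                      else (\<rho> ^ (n+1) + inverse (\<rho> ^ (n+1))) / (\<rho> + inverse \<rho>))
            \<le> cmod (chebU n z))
       \<and> {z \<in> bernstein_ellipse \<rho>.
            cmod (chebU n z) =
            (if odd n then (\<rho> ^ (n+1) - inverse (\<rho> ^ (n+1))) / (\<rho> + inverse \<rho>)
                      else (\<rho> ^ (n+1) + inverse (\<rho> ^ (n+1))) / (\<rho> + inverse \<rho>))}
         = {\<i> * complex_of_real ((\<rho> - inverse \<rho>) / 2), - \<i> * complex_of_real ((\<rho> - inverse \<rho>) / 2)}"
proof -
  define t where "t = (if odd n then (\<rho> ^ (n+1) - inverse (\<rho> ^ (n+1))) / (\<rho> + inverse \<rho>)
                      else (\<rho> ^ (n+1) + inverse (\<rho> ^ (n+1))) / (\<rho> + inverse \<rho>))"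
  define b where "b = (\<rho> - inverse \<rho>) / 2"
  define Z where "Z = (\<lambda>\<theta>. (complex_of_real \<rho> * cis \<theta> + inverse (complex_of_real \<rho> * cis \<theta>)) / 2)"
  have r1: "\<rho> > 1" using assms rho_star_props by auto
  have B0: "\<rho> + inverse \<rho> > 0" using rho_gt2[OF r1] by simp
  have P1: "\<rho>^(n+1) \<ge> 1" using r1 by (intro one_le_power) auto
  hence "inverse (\<rho>^(n+1)) \<le> 1" using le_imp_inverse_le[OF P1 zero_less_one] by (simp only: inverse_1)
  hence n1: "\<rho>^(n+1) - inverse (\<rho>^(n+1)) \<ge> 0" using P1 by linarith
  have n2: "\<rho>^(n+1) + inverse (\<rho>^(n+1)) \<ge> 0" using P1 r1 by (intro add_nonneg_nonneg) auto
  have t0: "t \<ge> 0" unfolding t_def using divide_nonneg_pos[OF n1 B0] divide_nonneg_pos[OF n2 B0] by (simp only: if_split) blast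
  have key: "t \<le> cmod (chebU n (Z \<theta>)) \<and> (cmod (chebU n (Z \<theta>)) = t \<longleftrightarrow> cos \<theta> = 0)" for \<theta>
  proof -
    note c = calc(1)[OF r1, where n=n and \<theta>=\<theta>] calc(2)[OF r1, where \<theta>=\<theta>]
    have alg: "t^2 * ((\<rho> + inverse \<rho>)^2 - 4 * (cos \<theta>)^2) \<le> (\<rho>^(n+1) + inverse (\<rho>^(n+1)))^2 - 4 * (cos (real (n+1) * \<theta>))^2
      \<and> (t^2 * ((\<rho> + inverse \<rho>)^2 - 4 * (cos \<theta>)^2) = (\<rho>^(n+1) + inverse (\<rho>^(n+1)))^2 - 4 * (cos (real (n+1) * \<theta>))^2
           \<longleftrightarrow> cos \<theta> = 0)"
    proof (cases "odd n")
      case True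
      then show ?thesis using odd_alg[OF True r1, of \<theta>] unfolding t_def by simp
    next
      case False
      have ge: "0 \<le> a_coef (Suc n) \<rho> - real (Suc n) * a_coef 1 \<rho>"
        using assms False rho_star_props by auto
      show ?thesis using even_alg[of n \<rho> \<theta>] False assms(1) r1 ge unfolding t_def by simp
    qed
    have "(t \<le> cmod (chebU n (Z \<theta>)) \<longleftrightarrow> t^2 * ((\<rho> + inverse \<rho>)^2 - 4 * (cos \<theta>)^2) \<le> (\<rho>^(n+1) + inverse (\<rho>^(n+1)))^2 - 4 * (cos (real (n+1) * \<theta>))^2)
      \<and> (cmod (chebU n (Z \<theta>)) = t \<longleftrightarrow> t^2 * ((\<rho> + inverse \<rho>)^2 - 4 * (cos \<theta>)^2) = (\<rho>^(n+1) + inverse (\<rho>^(n+1)))^2 - 4 * (cos (real (n+1) * \<theta>))^2)"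
      by (rule reduce) (use c t0 in \<open>simp_all add: Z_def\<close>)
    thus ?thesis using alg by blast
  qed
  have zf: "Z \<theta> = complex_of_real ((\<rho> + inverse \<rho>)/2 * cos \<theta>) + \<i> * complex_of_real (b * sin \<theta>)" for \<theta>
    unfolding Z_def b_def using zform[of \<rho> \<theta>] r1 by simp
  have ell: "z \<in> bernstein_ellipse \<rho> \<longleftrightarrow> (\<exists>\<theta>. 0 \<le> \<theta> \<and> \<theta> < 2 * pi \<and> z = Z \<theta>)" for z
    unfolding ell_iff Z_def ..
  have part1: "\<forall>z\<in>bernstein_ellipse \<rho>. t \<le> cmod (chebU n z)"
  proof
    fix z assume "z \<in> bernstein_ellipse \<rho>"
    then obtain \<theta> where "z = Z \<theta>" using ell by blast
    thus "t \<le> cmod (chebU n z)" using key[of \<theta>] by simp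
  qed
  have part2: "{z \<in> bernstein_ellipse \<rho>. cmod (chebU n z) = t} = {\<i> * complex_of_real b, - \<i> * complex_of_real b}"
  proof (intro equalityI subsetI)
    fix z assume "z \<in> {z \<in> bernstein_ellipse \<rho>. cmod (chebU n z) = t}"
    then obtain \<theta> where th: "z = Z \<theta>" "cmod (chebU n (Z \<theta>)) = t" using ell by auto
    hence c0: "cos \<theta> = 0" using key by blast
    hence "(sin \<theta>)^2 = 1" using sin_cos_squared_add[of \<theta>] by simp
    hence "sin \<theta> = 1 \<or> sin \<theta> = -1" by (simp add: power2_eq_1_iff)
    thus "z \<in> {\<i> * complex_of_real b, - \<i> * complex_of_real b}"
      using th(1) zf[of \<theta>] c0 by auto
  next
    fix z assume "z \<in> {\<i> * complex_of_real b, - \<i> * complex_of_real b}"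
    have z1: "Z (pi/2) = \<i> * complex_of_real b" unfolding zf cos_pi_half sin_pi_half by simp
    have z3: "Z (3/2*pi) = - \<i> * complex_of_real b" unfolding zf cos_3over2_pi sin_3over2_pi by simp
    then consider "z = Z (pi/2)" | "z = Z (3/2*pi)" using z1 z3 \<open>z \<in> _\<close> by auto
    then show "z \<in> {z \<in> bernstein_ellipse \<rho>. cmod (chebU n z) = t}"
    proof cases
      case 1
      have "0 \<le> pi/2 \<and> pi/2 < 2*pi" using pi_gt_zero by linarith
      hence "z \<in> bernstein_ellipse \<rho>" unfolding ell using 1 by blast
      moreover have "cmod (chebU n z) = t" using 1 key[of "pi/2"] by simp
      ultimately show ?thesis by simp
    next
      case 2
      have "0 \<le> 3/2*pi \<and> 3/2*pi < 2*pi" using pi_gt_zero by linarith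
      hence "z \<in> bernstein_ellipse \<rho>" unfolding ell using 2 by blast
      moreover have "cmod (chebU n z) = t" using 2 key[of "3/2*pi"] cos_3over2_pi by (simp only:)
      ultimately show ?thesis by simp
    qed
  qed
  show ?thesis using part1 part2 unfolding t_def b_def by simp
qed

end
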